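(* A strongly connected tournament $G$ is triangle-connected if and only if $G$ has no nontrivial homogeneous set that contains (the vertex set of) a cyclic triangle.
   Context: A tournament is a finite, non-null, loopless directed graph in which for any two distinct vertices $u,v$ there is exactly one edge with both ends in $\{u,v\}$; write $u\to v$ for the edge from $u$ to $v$. A homogeneous set of $G$ is a set $X\subseteq V(G)$ such that each $v\in V(G)\setminus X$ either has $v\to x$ for all $x\in X$ or $x\to v$ for all $x\in X$; it is nontrivial if $1<|X|<|V(G)|$. $G$ is strongly connected if for any two vertices $u,v$ there are directed paths from $u$ to $v$ and from $v$ to $u$. Two cyclic triangles in $G$ are adjacent if they share exactly two vertices; cyclic triangles $C,C'$ are triangle-connected if there is a sequence $C_1,\dots,C_n$ ($n\ge1$) of cyclic triangles with $C_1=C$, $C_n=C'$, and $C_i$ adjacent to $C_{i+1}$ for all $i$. A tournament is triangle-connected if it is strongly connected and any two of its cyclic triangles are triangle-connected. *)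

theory Defs
  imports Main
begin

definition tournament :: "'a set \<Rightarrow> ('a \<Rightarrow> 'a \<Rightarrow> bool) \<Rightarrow> bool" where
  "tournament V E \<longleftrightarrow> finite V \<and> V \<noteq> {} \<and>
     (\<forall>u v. E u v \<longrightarrow> u \<in> V \<and> v \<in> V) \<and>
     (\<forall>v. \<not> E v v) \<and>
     (\<forall>u\<in>V. \<forall>v\<in>V. u \<noteq> v \<longrightarrow> (E u v \<longleftrightarrow> \<not> E v u))"

definition homogeneous_set :: "'a set \<Rightarrow> ('a \<Rightarrow> 'a \<Rightarrow> bool) \<Rightarrow> 'a set \<Rightarrow> bool" where
  "homogeneous_set V E X \<longleftrightarrow> X \<subseteq> V \<and>
     (\<forall>v \<in> V - X. (\<forall>x\<in>X. E v x) \<or> (\<forall>x\<in>X. E x v))"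

definition nontrivial_homogeneous_set :: "'a set \<Rightarrow> ('a \<Rightarrow> 'a \<Rightarrow> bool) \<Rightarrow> 'a set \<Rightarrow> bool" where
  "nontrivial_homogeneous_set V E X \<longleftrightarrow> homogeneous_set V E X \<and> 1 < card X \<and> card X < card V"

definition strongly_connected :: "'a set \<Rightarrow> ('a \<Rightarrow> 'a \<Rightarrow> bool) \<Rightarrow> bool" where
  "strongly_connected V E \<longleftrightarrow> (\<forall>u\<in>V. \<forall>v\<in>V. E\<^sup>*\<^sup>* u v)"

definition cyclic_triangle :: "'a set \<Rightarrow> ('a \<Rightarrow> 'a \<Rightarrow> bool) \<Rightarrow> 'a set \<Rightarrow> bool" where
  "cyclic_triangle V E T \<longleftrightarrow> T \<subseteq> V \<and>
     (\<exists>a b c. T = {a, b, c} \<and> a \<noteq> b \<and> b \<noteq> c \<and> a \<noteq> c \<and> E a b \<and> E b c \<and> E c a)"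

definition adjacent_triangles :: "'a set \<Rightarrow> ('a \<Rightarrow> 'a \<Rightarrow> bool) \<Rightarrow> 'a set \<Rightarrow> 'a set \<Rightarrow> bool" where
  "adjacent_triangles V E C C' \<longleftrightarrow> cyclic_triangle V E C \<and> cyclic_triangle V E C' \<and>
     card (C \<inter> C') = 2"

definition triangle_connected_pair :: "'a set \<Rightarrow> ('a \<Rightarrow> 'a \<Rightarrow> bool) \<Rightarrow> 'a set \<Rightarrow> 'a set \<Rightarrow> bool" where
  "triangle_connected_pair V E C C' \<longleftrightarrow> cyclic_triangle V E C \<and> cyclic_triangle V E C' \<and>
     (adjacent_triangles V E)\<^sup>*\<^sup>* C C'"

definition triangle_connected :: "'a set \<Rightarrow> ('a \<Rightarrow> 'a \<Rightarrow> bool) \<Rightarrow> bool" where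
  "triangle_connected V E \<longleftrightarrow> strongly_connected V E \<and>
     (\<forall>C C'. cyclic_triangle V E C \<and> cyclic_triangle V E C' \<longrightarrow> triangle_connected_pair V E C C')"

end

theory Submission
  imports Defs
begin

abbreviation conn where "conn V E \<equiv> (adjacent_triangles V E)\<^sup>*\<^sup>*"

lemma tE: assumes "tournament V E" "E u v" shows "u \<in> V" "v \<in> V" "u \<noteq> v" "\<not> E v u"
  using assms unfolding tournament_def by metis+

lemma tot: assumes "tournament V E" "u \<in> V" "v \<in> V" "u \<noteq> v" shows "E u v \<or> E v u"
  using assms unfolding tournament_def by metis

lemma cyc_intro: assumes "tournament V E" "E a b" "E b c" "E c a"
  shows "cyclic_triangle V E {a,b,c}"
proof -
  have "a \<in> V" "b \<in> V" "c \<in> V" "a \<noteq> b" "b \<noteq> c" "c \<noteq> a"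
    using tE[OF assms(1) assms(2)] tE[OF assms(1) assms(3)] tE[OF assms(1) assms(4)] by blast+
  thus ?thesis unfolding cyclic_triangle_def using assms(2-4)
    by (intro conjI exI[of _ a] exI[of _ b] exI[of _ c]) auto
qed

lemma cyc_elim: assumes "cyclic_triangle V E C" "a \<in> C"
  shows "\<exists>p q. C = {a,p,q} \<and> E a p \<and> E p q \<and> E q a"
proof -
  obtain x y z where C: "C = {x,y,z}" "E x y" "E y z" "E z x"
    using assms(1) unfolding cyclic_triangle_def by blast
  have "a = x \<or> a = y \<or> a = z" using assms(2) C(1) by blast
  then show ?thesis
  proof (elim disjE)
    assume a: "a = x"
    thus ?thesis using C a by (intro exI[of _ y] exI[of _ z]) simp
  next
    assume a: "a = y"
    have "C = {a,z,x}" using C(1) a by blast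
    thus ?thesis using C(2-4) a by (intro exI[of _ z] exI[of _ x]) simp
  next
    assume a: "a = z"
    have "C = {a,x,y}" using C(1) a by blast
    thus ?thesis using C(2-4) a by (intro exI[of _ x] exI[of _ y]) simp
  qed
qed

lemma cyc_sub: "cyclic_triangle V E C \<Longrightarrow> C \<subseteq> V"
  unfolding cyclic_triangle_def by blast

lemma orient: assumes "tournament V E" "cyclic_triangle V E C" "x \<in> C" "y \<in> C" "z \<in> C"
  "x \<noteq> y" "y \<noteq> z" "x \<noteq> z" "E x y" shows "E y z \<and> E z x"
proof -
  obtain p q where C: "C = {x,p,q}" "E x p" "E p q" "E q x" using cyc_elim[OF assms(2,3)] by blast
  have "y = p \<or> y = q" "z = p \<or> z = q" using assms(4-8) C(1) by auto
  moreover have "\<not> E x q" using tE(4)[OF assms(1) C(4)] .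
  ultimately show ?thesis using assms(6-9) C by metis
qed

lemma share2: assumes t: "tournament V E" and c: "cyclic_triangle V E C" "cyclic_triangle V E C'"
  and "u \<in> C" "u \<in> C'" "w \<in> C" "w \<in> C'" "u \<noteq> w"
  shows "conn V E C C'"
proof (cases "C = C'")
  case True thus ?thesis by simp
next
  case False
  obtain p q where C: "C = {u,p,q}" "E u p" "E p q" "E q u" using cyc_elim[OF c(1) assms(4)] by blast
  obtain p' q' where C': "C' = {u,p',q'}" "E u p'" "E p' q'" "E q' u" using cyc_elim[OF c(2) assms(5)] by blast
  have d: "u \<noteq> p" "u \<noteq> q" "p \<noteq> q" "u \<noteq> p'" "u \<noteq> q'" "p' \<noteq> q'"
    using C C' tE(3)[OF t] by metis+
  have w: "w = p \<or> w = q" "w = p' \<or> w = q'" using assms(6-8) C(1) C'(1) by auto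
  have "C \<inter> C' = {u,w}"
    using False C(1) C'(1) d w by auto
  hence "card (C \<inter> C') = 2" using assms(8) by simp
  thus ?thesis using c unfolding adjacent_triangles_def by auto
qed

lemma adj_sym: "adjacent_triangles V E C D \<Longrightarrow> adjacent_triangles V E D C"
  unfolding adjacent_triangles_def by (simp add: Int_commute)

lemma conn_sym: "conn V E C D \<Longrightarrow> conn V E D C"
proof (induction rule: rtranclp_induct)
  case base thus ?case by simp
next
  case (step y z)
  thus ?case using adj_sym[OF step(2)] by (meson converse_rtranclp_into_rtranclp)
qed

lemma conn_tri: "conn V E C D \<Longrightarrow> cyclic_triangle V E C \<Longrightarrow> cyclic_triangle V E D"
  by (induction rule: rtranclp_induct) (auto simp: adjacent_triangles_def)

lemma mixed: assumes t: "tournament V E" and c: "cyclic_triangle V E C" and v: "v \<in> V" "v \<notin> C"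
  and m: "x \<in> C" "E v x" "y \<in> C" "E y v"
  shows "\<exists>C'. adjacent_triangles V E C C' \<and> v \<in> C'"
proof -
  obtain a b c where C: "C = {a,b,c}" "E a b" "E b c" "E c a"
    using c unfolding cyclic_triangle_def by blast
  have V: "a \<in> V" "b \<in> V" "c \<in> V" using C tE[OF t] by auto
  have d: "v \<noteq> a" "v \<noteq> b" "v \<noteq> c" using v C by auto
  have tv: "\<And>z. z \<in> V \<Longrightarrow> v \<noteq> z \<Longrightarrow> E v z \<or> E z v" using tot[OF t v(1)] by blast
  have key: "\<exists>r s. (r,s) \<in> {(a,b),(b,c),(c,a)} \<and> E v r \<and> E s v"
  proof -
    have "E v a \<or> E a v" "E v b \<or> E b v" "E v c \<or> E c v" using tv V d by auto
    moreover have "\<not> (E v a \<and> E v b \<and> E v c)" using m C tE(4)[OF t] by blast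
    moreover have "\<not> (E a v \<and> E b v \<and> E c v)" using m C tE(4)[OF t] by blast
    ultimately show ?thesis by blast
  qed
  then obtain r s where rs: "(r,s) \<in> {(a,b),(b,c),(c,a)}" "E v r" "E s v" by blast
  have Ers: "E r s" using rs(1) C by auto
  have ct: "cyclic_triangle V E {v,r,s}" using cyc_intro[OF t rs(2) Ers rs(3)] .
  have "{r,s} \<subseteq> C" "r \<noteq> s" using rs(1) C tE(3)[OF t Ers] by auto
  hence "C \<inter> {v,r,s} = {r,s}" using v(2) by auto
  hence "card (C \<inter> {v,r,s}) = 2" using \<open>r \<noteq> s\<close> by simp
  thus ?thesis using c ct unfolding adjacent_triangles_def by blast
qed

definition XD where "XD V E D = {v. \<exists>C. conn V E D C \<and> v \<in> C}"

lemma XD_hom: assumes t: "tournament V E" and D: "cyclic_triangle V E D"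
  shows "homogeneous_set V E (XD V E D)"
proof -
  have sub: "XD V E D \<subseteq> V" unfolding XD_def using conn_tri[OF _ D] cyc_sub by blast
  have "(\<forall>x\<in>XD V E D. E v x) \<or> (\<forall>x\<in>XD V E D. E x v)" if v: "v \<in> V" "v \<notin> XD V E D" for v
  proof -
    have notin: "v \<notin> C" if "conn V E D C" for C using v that unfolding XD_def by blast
    have nomix: "(\<forall>x\<in>C. E v x) \<or> (\<forall>x\<in>C. E x v)" if cD: "conn V E D C" for C
    proof (rule ccontr)
      assume "\<not> ?thesis"
      then obtain x y where "x \<in> C" "\<not> E v x" "y \<in> C" "\<not> E y v" by blast
      moreover have "x \<in> V" "y \<in> V" using conn_tri[OF cD D] cyc_sub \<open>x\<in>C\<close> \<open>y\<in>C\<close> by blast+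
      moreover have "v \<noteq> x" "v \<noteq> y" using notin[OF cD] \<open>x\<in>C\<close> \<open>y\<in>C\<close> by auto
      ultimately have "E x v" "E v y" using tot[OF t] v(1) by metis+
      then obtain C' where "adjacent_triangles V E C C'" "v \<in> C'"
        using mixed[OF t conn_tri[OF cD D] v(1) notin[OF cD] \<open>y\<in>C\<close> _ \<open>x\<in>C\<close>] by blast
      hence "conn V E D C'" using cD by (meson rtranclp.rtrancl_into_rtrancl)
      hence "v \<in> XD V E D" unfolding XD_def using \<open>v \<in> C'\<close> by blast
      thus False using v by blast
    qed
    define b where "b = (\<forall>x\<in>D. E v x)"
    have "\<forall>C. conn V E D C \<longrightarrow> (if b then (\<forall>x\<in>C. E v x) else (\<forall>x\<in>C. E x v))"
    proof (intro allI impI)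
      fix C assume "conn V E D C"
      thus "if b then (\<forall>x\<in>C. E v x) else (\<forall>x\<in>C. E x v)"
      proof (induction rule: rtranclp_induct)
        case base
        have "D \<noteq> {}" using D unfolding cyclic_triangle_def by blast
        then obtain d where "d \<in> D" by blast
        thus ?case using nomix[of D] b_def tE(4)[OF t] by force
      next
        case (step C1 C2)
        have "card (C1 \<inter> C2) = 2" using step(2) unfolding adjacent_triangles_def by blast
        hence "C1 \<inter> C2 \<noteq> {}" by force
        then obtain z where z: "z \<in> C1" "z \<in> C2" by blast
        have n2: "(\<forall>x\<in>C2. E v x) \<or> (\<forall>x\<in>C2. E x v)"
          using nomix step(1,2) by (meson rtranclp.rtrancl_into_rtrancl)
        show ?case
        proof (cases b)
          case True
          thus ?thesis using step(3) n2 z tE(4)[OF t] by auto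
        next
          case False
          thus ?thesis using step(3) n2 z tE(4)[OF t] by auto
        qed
      qed
    qed
    moreover have "\<forall>x\<in>XD V E D. \<exists>C. conn V E D C \<and> x \<in> C" unfolding XD_def by blast
    ultimately show ?thesis by (cases b) (metis, metis)
  qed
  thus ?thesis unfolding homogeneous_set_def using sub by blast
qed

lemma cyc_card: assumes t: "tournament V E" and c: "cyclic_triangle V E C" shows "card C = 3"
proof -
  obtain a b c where C: "C = {a,b,c}" "E a b" "E b c" "E c a"
    using c unfolding cyclic_triangle_def by blast
  have "a \<noteq> b" "b \<noteq> c" "a \<noteq> c" using C tE[OF t] by metis+
  thus ?thesis using C by simp
qed

lemma XD_all: assumes t: "tournament V E"
  and h: "\<not> (\<exists>X T. nontrivial_homogeneous_set V E X \<and> cyclic_triangle V E T \<and> T \<subseteq> X)"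
  and D: "cyclic_triangle V E D"
  shows "XD V E D = V"
proof (rule ccontr)
  assume ne: "XD V E D \<noteq> V"
  have H: "homogeneous_set V E (XD V E D)" using XD_hom[OF t D] .
  have sub: "XD V E D \<subseteq> V" using H unfolding homogeneous_set_def by blast
  have fin: "finite V" using t unfolding tournament_def by blast
  have DX: "D \<subseteq> XD V E D" unfolding XD_def by blast
  have "card D \<le> card (XD V E D)" using card_mono[OF finite_subset[OF sub fin] DX] .
  hence c1: "1 < card (XD V E D)" using cyc_card[OF t D] by simp
  have c2: "card (XD V E D) < card V" using psubset_card_mono[OF fin] sub ne by blast
  show False using h H c1 c2 D DX unfolding nontrivial_homogeneous_set_def by blast
qed

lemma stripA: assumes t: "tournament V E" and pq: "E p q"
  and B: "cyclic_triangle V E B" "p \<in> B" "q \<in> B"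
  and C: "C \<subseteq> {z. E q z \<and> E z p}"
  and cc: "conn V E C C'"
  shows "C' \<subseteq> {z. E q z \<and> E z p} \<or> conn V E B C'"
  using cc
proof (induction rule: rtranclp_induct)
  case base thus ?case using C by blast
next
  case (step C1 C2)
  let ?S = "{z. E q z \<and> E z p}"
  have Z0: "conn V E B {p,q,u}" "cyclic_triangle V E {p,q,u}" if "u \<in> ?S" for u
  proof -
    show c: "cyclic_triangle V E {p,q,u}" using cyc_intro[OF t pq] that by blast
    show "conn V E B {p,q,u}" using share2[OF t B(1) c B(2) _ B(3) _ tE(3)[OF t pq]] by blast
  qed
  show ?case
  proof (cases "conn V E B C1")
    case True thus ?thesis using step(2) by (meson rtranclp.rtrancl_into_rtrancl)
  next
    case False
    hence C1S: "C1 \<subseteq> ?S" using step(3) by blast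
    show ?thesis
    proof (cases "C2 \<subseteq> ?S")
      case True thus ?thesis by blast
    next
      case False
      then obtain w where w: "w \<in> C2" "w \<notin> ?S" by blast
      have C2: "cyclic_triangle V E C2" using step(2) unfolding adjacent_triangles_def by blast
      have "card (C1 \<inter> C2) = 2" using step(2) unfolding adjacent_triangles_def by blast
      then obtain u1 u2 where u: "C1 \<inter> C2 = {u1,u2}" "u1 \<noteq> u2" by (meson card_2_iff)
      have uS: "u1 \<in> ?S" "u2 \<in> ?S" "u1 \<in> C2" "u2 \<in> C2" using u C1S by blast+
      have main: "conn V E B C2" if a: "x1 \<in> ?S" "x2 \<in> ?S" "x1 \<in> C2" "x2 \<in> C2" "x1 \<noteq> x2" "E x1 x2" for x1 x2
      proof -
        have wx: "w \<noteq> x1" "w \<noteq> x2" using w a by blast+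
        have o: "E x2 w" "E w x1" using orient[OF t C2 a(3,4) w(1) a(5) wx(2)[symmetric] wx(1)[symmetric] a(6)] by blast+
        have wV: "w \<in> V" "p \<in> V" "q \<in> V" using C2 cyc_sub w(1) tE[OF t pq] by blast+
        have x1p: "E x1 p" "E q x1" "E x2 p" "E q x2" using a by blast+
        show ?thesis
        proof (cases "E w p")
          case False
          show ?thesis
          proof (cases "w = p")
            case True
            have "conn V E {p,q,x1} C2"
              using share2[OF t Z0(2)[OF a(1)] C2, of p x1] True w(1) a(3) tE(3)[OF t x1p(1)] by auto
            thus ?thesis using Z0(1)[OF a(1)] by (meson rtranclp_trans)
          next
            case wp: False
            hence Epw: "E p w" using tot[OF t wV(2) wV(1)] False by blast
            have cZ: "cyclic_triangle V E {p,w,x1}" using cyc_intro[OF t Epw o(2) x1p(1)] .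
            have c1: "conn V E {p,q,x1} {p,w,x1}"
              using share2[OF t Z0(2)[OF a(1)] cZ, of p x1] tE(3)[OF t x1p(1)] by auto
            have c2: "conn V E {p,w,x1} C2"
              using share2[OF t cZ C2, of w x1] w(1) a(3) wx(1) by auto
            show ?thesis using Z0(1)[OF a(1)] c1 c2 by (meson rtranclp_trans)
          qed
        next
          case True
          hence nq: "\<not> E q w" using w by blast
          show ?thesis
          proof (cases "w = q")
            case wq: True
            have "conn V E {p,q,x2} C2"
              using share2[OF t Z0(2)[OF a(2)] C2, of q x2] wq w(1) a(4) tE(3)[OF t x1p(4)] by auto
            thus ?thesis using Z0(1)[OF a(2)] by (meson rtranclp_trans)
          next
            case wq: False
            hence Ewq: "E w q" using tot[OF t wV(3) wV(1)] nq by blast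
            have cZ: "cyclic_triangle V E {q,x2,w}" using cyc_intro[OF t x1p(4) o(1) Ewq] .
            have c1: "conn V E {p,q,x2} {q,x2,w}"
              using share2[OF t Z0(2)[OF a(2)] cZ, of q x2] tE(3)[OF t x1p(4)] by auto
            have c2: "conn V E {q,x2,w} C2"
              using share2[OF t cZ C2, of w x2] w(1) a(4) wx(2) by auto
            show ?thesis using Z0(1)[OF a(2)] c1 c2 by (meson rtranclp_trans)
          qed
        qed
      qed
      have "u1 \<in> V" "u2 \<in> V" using uS(3,4) C2 cyc_sub by blast+
      hence "E u1 u2 \<or> E u2 u1" using tot[OF t] u(2) by blast
      thus ?thesis using main uS u(2) by metis
    qed
  qed
qed

lemma key: assumes t: "tournament V E"
  and allc: "\<And>D. cyclic_triangle V E D \<Longrightarrow> XD V E D = V"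
  and T: "cyclic_triangle V E T" and D: "cyclic_triangle V E D" and a: "a \<in> T" "a \<in> D"
  shows "conn V E T D"
proof -
  obtain p q where Tpq: "T = {a,p,q}" "E a p" "E p q" "E q a" using cyc_elim[OF T a(1)] by blast
  obtain ov i where Doi: "D = {a,ov,i}" "E a ov" "E ov i" "E i a" using cyc_elim[OF D a(2)] by blast
  have V: "a \<in> V" "p \<in> V" "q \<in> V" "ov \<in> V" "i \<in> V" using tE[OF t] Tpq Doi by metis+
  have ne: "a \<noteq> p" "a \<noteq> q" "a \<noteq> ov" "a \<noteq> i" "p \<noteq> q" "ov \<noteq> i"
    using tE(3)[OF t] Tpq Doi by metis+
  show ?thesis
  proof (cases "p = ov \<or> q = i")
    case True
    then obtain w where "w \<in> T" "w \<in> D" "w \<noteq> a" using Tpq Doi ne by blast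
    thus ?thesis using share2[OF t T D a(1,2)] by metis
  next
    case False
    hence po: "p \<noteq> ov" "q \<noteq> i" by auto
    have qo: "q \<noteq> ov" using tE(4)[OF t] Tpq(4) Doi(2) by metis
    have pi: "p \<noteq> i" using tE(4)[OF t] Tpq(2) Doi(4) by metis
    show ?thesis
    proof (cases "E ov q")
      case True
      have c: "cyclic_triangle V E {a,ov,q}" using cyc_intro[OF t Doi(2) True Tpq(4)] .
      have "conn V E T {a,ov,q}" using share2[OF t T c, of a q] Tpq ne by auto
      moreover have "conn V E {a,ov,q} D" using share2[OF t c D, of a ov] Doi ne by auto
      ultimately show ?thesis by (meson rtranclp_trans)
    next
      case False
      hence Eqo: "E q ov" using tot[OF t V(3,4) qo] by blast
      show ?thesis
      proof (cases "E p i")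
        case True
        have c: "cyclic_triangle V E {a,p,i}" using cyc_intro[OF t Tpq(2) True Doi(4)] .
        have "conn V E T {a,p,i}" using share2[OF t T c, of a p] Tpq ne by auto
        moreover have "conn V E {a,p,i} D" using share2[OF t c D, of a i] Doi ne by auto
        ultimately show ?thesis by (meson rtranclp_trans)
      next
        case False
        hence Eip: "E i p" using tot[OF t V(2,5) pi] by blast
        have pq': "p \<noteq> ov" "q \<noteq> i" using po .
        consider "E ov p" "E i q" | "E p ov" "E q i" | "E ov p" "E q i" | "E p ov" "E i q"
          using tot[OF t V(2,4) po(1)] tot[OF t V(3,5) po(2)] by blast
        thus ?thesis
        proof cases
          case 1
          have c1: "cyclic_triangle V E {p,q,ov}" using cyc_intro[OF t Tpq(3) Eqo 1(1)] .
          have c2: "cyclic_triangle V E {q,ov,i}" using cyc_intro[OF t Eqo Doi(3) 1(2)] .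
          have "conn V E T {p,q,ov}" using share2[OF t T c1, of p q] Tpq ne by auto
          moreover have "conn V E {p,q,ov} {q,ov,i}" using share2[OF t c1 c2, of q ov] qo by auto
          moreover have "conn V E {q,ov,i} D" using share2[OF t c2 D, of ov i] Doi ne by auto
          ultimately show ?thesis by (meson rtranclp_trans)
        next
          case 2
          have c1: "cyclic_triangle V E {ov,i,p}" using cyc_intro[OF t Doi(3) Eip 2(1)] .
          have c2: "cyclic_triangle V E {i,p,q}" using cyc_intro[OF t Eip Tpq(3) 2(2)] .
          have "conn V E D {ov,i,p}" using share2[OF t D c1, of ov i] Doi ne by auto
          moreover have "conn V E {ov,i,p} {i,p,q}" using share2[OF t c1 c2, of i p] pi by auto
          moreover have "conn V E {i,p,q} T" using share2[OF t c2 T, of p q] Tpq ne by auto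
          ultimately show ?thesis using conn_sym by (meson rtranclp_trans)
        next
          case 3
          have DS: "D \<subseteq> {z. E q z \<and> E z p}" using Doi Tpq Eqo 3 Eip by auto
          have "p \<in> XD V E D" using allc[OF D] V by blast
          then obtain C' where C': "conn V E D C'" "p \<in> C'" unfolding XD_def by blast
          have "p \<notin> {z. E q z \<and> E z p}" using tE(3)[OF t] by blast
          hence "conn V E T C'" using stripA[OF t Tpq(3) T _ _ DS C'(1)] C'(2) Tpq(1) by blast
          thus ?thesis using conn_sym[OF C'(1)] by (meson rtranclp_trans)
        next
          case 4
          have TS: "T \<subseteq> {z. E i z \<and> E z ov}" using Doi Tpq Eqo 4 Eip by auto
          have "ov \<in> XD V E T" using allc[OF T] V by blast
          then obtain C' where C': "conn V E T C'" "ov \<in> C'" unfolding XD_def by blast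
          have "ov \<notin> {z. E i z \<and> E z ov}" using tE(3)[OF t] by blast
          hence "conn V E D C'" using stripA[OF t Doi(3) D _ _ TS C'(1)] C'(2) Doi(1) by blast
          thus ?thesis using conn_sym C'(1) by (meson rtranclp_trans)
        qed
      qed
    qed
  qed
qed

lemma leave: "r\<^sup>*\<^sup>* a z \<Longrightarrow> P a \<Longrightarrow> \<not> P z \<Longrightarrow> \<exists>u w. P u \<and> \<not> P w \<and> r u w"
  by (induction rule: rtranclp_induct) auto

lemma stay: assumes t: "tournament V E" and H: "homogeneous_set V E X"
  and C: "C \<subseteq> X" and cc: "conn V E C C'"
  shows "C' \<subseteq> X"
  using cc
proof (induction rule: rtranclp_induct)
  case base thus ?case using C by simp
next
  case (step C1 C2)
  have C2: "cyclic_triangle V E C2" using step(2) unfolding adjacent_triangles_def by blast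
  have "card (C1 \<inter> C2) = 2" using step(2) unfolding adjacent_triangles_def by blast
  then obtain u1 u2 where u: "C1 \<inter> C2 = {u1,u2}" "u1 \<noteq> u2" by (meson card_2_iff)
  have uX: "u1 \<in> X" "u2 \<in> X" "u1 \<in> C2" "u2 \<in> C2" using u step(3) by blast+
  have uV: "u1 \<in> V" "u2 \<in> V" using uX(3,4) C2 cyc_sub by blast+
  show ?case
  proof
    fix w assume w: "w \<in> C2"
    show "w \<in> X"
    proof (rule ccontr)
      assume wX: "w \<notin> X"
      have wV: "w \<in> V" using w C2 cyc_sub by blast
      have hw: "(\<forall>x\<in>X. E w x) \<or> (\<forall>x\<in>X. E x w)" using H wV wX unfolding homogeneous_set_def by blast
      have wu: "w \<noteq> u1" "w \<noteq> u2" using wX uX by blast+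
      have "E u1 u2 \<or> E u2 u1" using tot[OF t uV u(2)] .
      thus False
      proof
        assume e: "E u1 u2"
        have "E u2 w" "E w u1" using orient[OF t C2 uX(3,4) w u(2) wu(2)[symmetric] wu(1)[symmetric] e] by blast+
        thus False using hw uX tE(4)[OF t] by blast
      next
        assume e: "E u2 u1"
        have "E u1 w" "E w u2" using orient[OF t C2 uX(4,3) w u(2)[symmetric] wu(1)[symmetric] wu(2)[symmetric] e] by blast+
        thus False using hw uX tE(4)[OF t] by blast
      qed
    qed
  qed
qed

theorem corollary4p2:
  assumes "tournament V E" and "strongly_connected V E"
  shows "triangle_connected V E \<longleftrightarrow>
    \<not> (\<exists>X T. nontrivial_homogeneous_set V E X \<and> cyclic_triangle V E T \<and> T \<subseteq> X)"
proof
  assume tc: "triangle_connected V E"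
  show "\<not> (\<exists>X T. nontrivial_homogeneous_set V E X \<and> cyclic_triangle V E T \<and> T \<subseteq> X)"
  proof
    assume "\<exists>X T. nontrivial_homogeneous_set V E X \<and> cyclic_triangle V E T \<and> T \<subseteq> X"
    then obtain X T where X: "homogeneous_set V E X" "1 < card X" "card X < card V"
      and T: "cyclic_triangle V E T" "T \<subseteq> X" unfolding nontrivial_homogeneous_set_def by blast
    have XV: "X \<subseteq> V" using X(1) unfolding homogeneous_set_def by blast
    have "X \<noteq> V" using X(3) by blast
    then obtain v where v: "v \<in> V" "v \<notin> X" using XV by blast
    have "T \<noteq> {}" using cyc_card[OF assms(1) T(1)] by auto
    then obtain x where x: "x \<in> T" by blast
    have xX: "x \<in> X" "x \<in> V" using x T(2) XV by blast+
    have "E\<^sup>*\<^sup>* x v" using assms(2) xX v unfolding strongly_connected_def by blast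
    from leave[OF this, of "\<lambda>z. z \<in> X"] xX v obtain y u where yu: "y \<in> X" "u \<notin> X" "E y u" by blast
    have uV: "u \<in> V" using tE(2)[OF assms(1) yu(3)] .
    have "(\<forall>z\<in>X. E u z) \<or> (\<forall>z\<in>X. E z u)" using X(1) uV yu(2) unfolding homogeneous_set_def by blast
    hence uA: "\<forall>z\<in>X. E z u" using yu tE(4)[OF assms(1)] by blast
    define A where "A = {w \<in> V. w \<notin> X \<and> (\<forall>z\<in>X. E z w)}"
    have "u \<in> A" unfolding A_def using uV yu uA by blast
    have "E\<^sup>*\<^sup>* u x" using assms(2) xX uV unfolding strongly_connected_def by blast
    from leave[OF this, of "\<lambda>z. z \<in> A"] \<open>u \<in> A\<close> xX obtain a b where ab: "a \<in> A" "b \<notin> A" "E a b"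
      unfolding A_def by blast
    have bV: "b \<in> V" using tE(2)[OF assms(1) ab(3)] .
    have aX: "a \<notin> X" "\<forall>z\<in>X. E z a" using ab(1) unfolding A_def by blast+
    have bX: "b \<notin> X" using aX(2) ab(3) tE(4)[OF assms(1)] by blast
    have "(\<forall>z\<in>X. E b z) \<or> (\<forall>z\<in>X. E z b)" using X(1) bV bX unfolding homogeneous_set_def by blast
    hence "\<forall>z\<in>X. E b z" using ab(2) bV bX unfolding A_def by blast
    hence Ebx: "E b x" using xX by blast
    have c: "cyclic_triangle V E {x,a,b}" using cyc_intro[OF assms(1) _ ab(3) Ebx] aX(2) xX by blast
    have "conn V E T {x,a,b}" using tc T(1) c unfolding triangle_connected_def triangle_connected_pair_def by blast
    hence "{x,a,b} \<subseteq> X" using stay[OF assms(1) X(1) T(2)] by blast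
    thus False using aX by blast
  qed
next
  assume h: "\<not> (\<exists>X T. nontrivial_homogeneous_set V E X \<and> cyclic_triangle V E T \<and> T \<subseteq> X)"
  have allc: "\<And>D. cyclic_triangle V E D \<Longrightarrow> XD V E D = V" using XD_all[OF assms(1) h] .
  show "triangle_connected V E"
    unfolding triangle_connected_def triangle_connected_pair_def
  proof (intro conjI allI impI assms(2))
    fix C C' assume CC: "cyclic_triangle V E C \<and> cyclic_triangle V E C'"
    show "cyclic_triangle V E C" "cyclic_triangle V E C'" using CC by blast+
    have "C' \<noteq> {}" using cyc_card[OF assms(1)] CC by fastforce
    then obtain a where a: "a \<in> C'" by blast
    have "a \<in> XD V E C" using allc CC a cyc_sub by blast
    then obtain T where T: "conn V E C T" "a \<in> T" unfolding XD_def by blast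
    have "conn V E T C'" using key[OF assms(1) allc conn_tri[OF T(1)] _ T(2) a] CC by blast
    thus "conn V E C C'" using T(1) by (meson rtranclp_trans)
  qed
qed


end
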